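(* Consider the augmented system below with $r=m$, where $\phi$ has relative degree $\rho\in\mathbb{N}^r$ and $\Omega_g(t,x)$ is invertible for all $(t,x)\in[t_0,\infty)\times\mathbb{R}^n$. Let $x_0\in\mathbb{R}^n$ satisfy $\phi_k(t_0,x_0)<0$ for all $k$, let $T>t_0$, and let $w\in L^1([t_0,T],\mathbb{R}^r)$ be any integrable input such that the augmented initial value problem has an absolutely continuous solution $x_A(t)=(x(t),\tilde z(t))$ on $[t_0,T]$ (satisfying the ODE almost everywhere). Then the first component $x(t)$ satisfies $\phi(t,x(t))\le0$ (componentwise) for all $t\in[t_0,T]$.
   Context: Setting: $f\in C^\infty([t_0,\infty)\times\mathbb{R}^n,\mathbb{R}^n)$, $g\in C^\infty([t_0,\infty)\times\mathbb{R}^n,\mathbb{R}^{n\times m})$, original system $\dot x=f(t,x)+g(t,x)u$. Time-varying Lie derivatives: $L_f^0\psi=\psi$, $L_f^j\psi=\frac{\partial L_f^{j-1}\psi}{\partial x}f+\frac{\partial L_f^{j-1}\psi}{\partial t}$, $L_gL_f^j\psi=\frac{\partial L_f^j\psi}{\partial x}g\in\mathbb{R}^{1\times m}$. $\phi\in C^\infty([t_0,\infty)\times\mathbb{R}^n,\mathbb{R}^r)$ has relative degree $\rho$ if for each $k$, $L_gL_f^i\phi_k\equiv0$ for $i\in\{0,\dots,\rho_k-2\}$ and $L_gL_f^{\rho_k-1}\phi_k(t,x)\ne0$ everywhere. Define $\Omega_g(t,x)\in\mathbb{R}^{r\times m}$ with $k$-th row $L_gL_f^{\rho_k-1}\phi_k(t,x)$.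 Augmented state $x_A=(x,\tilde z)$ with $\tilde z=(z_1,z_1^{(1)},\dots,z_1^{(\rho_1-1)},\dots,z_r,\dots,z_r^{(\rho_r-1)})$ (the $z_k^{(j)}$ being independent coordinates). Let $S_{k,i-1}=\tfrac12\sum_{j=1}^{i-1}\binom{i}{j}z_k^{(i-j)}z_k^{(j)}$, $\Omega_f(t,x,\tilde z)\in\mathbb{R}^r$ with $k$-th entry $S_{k,\rho_k-1}+L_f^{\rho_k}\phi_k(t,x)$, and $D(z)=\mathrm{diag}(z_1,\dots,z_r)$. The augmented dynamics with input $w\in\mathbb{R}^r$ are: $\dot x=f(t,x)+g(t,x)u$ with $u=-\Omega_g(t,x)^{-1}\big(\Omega_f(t,x,\tilde z)+D(z)w\big)$; $\frac{d}{dt}z_k^{(j)}=z_k^{(j+1)}$ for $0\le j\le\rho_k-2$; $\frac{d}{dt}z_k^{(\rho_k-1)}=w_k$. Initial conditions: $x(t_0)=x_0$, $z_k(t_0)=\sqrt{-2\phi_k(t_0,x_0)}$, and recursively $z_k^{(i)}(t_0)=-\big(L_f^i\phi_k(t_0,x_0)+S_{k,i-1}(t_0)\big)/z_k(t_0)$ for $i\in\{1,\dots,\rho_k-1\}$. *)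

theory Defs
  imports "HOL-Analysis.Analysis"
begin

definition absolutely_continuous_on :: "real set \<Rightarrow> (real \<Rightarrow> 'a::real_normed_vector) \<Rightarrow> bool" where
  "absolutely_continuous_on S h \<longleftrightarrow>
     (\<forall>\<epsilon>>0. \<exists>\<delta>>0. \<forall>D. finite D \<and> (\<forall>(u,v)\<in>D. u \<le> v \<and> {u..v} \<subseteq> S)
        \<and> disjoint_family_on (\<lambda>(u,v). {u<..<v}) D
        \<and> (\<Sum>(u,v)\<in>D. v - u) < \<delta>
        \<longrightarrow> (\<Sum>(u,v)\<in>D. norm (h v - h u)) < \<epsilon>)"

primrec Ck_on :: "nat \<Rightarrow> ('a::real_normed_vector) set \<Rightarrow> ('a \<Rightarrow> 'b::real_normed_vector) \<Rightarrow> bool" where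
  "Ck_on 0 S h \<longleftrightarrow> continuous_on S h"
| "Ck_on (Suc k) S h \<longleftrightarrow>
     (\<exists>h'. (\<forall>p\<in>S. (h has_derivative h' p) (at p within S)) \<and> (\<forall>v. Ck_on k S (\<lambda>p. h' p v)))"

definition smooth_on :: "('a::real_normed_vector) set \<Rightarrow> ('a \<Rightarrow> 'b::real_normed_vector) \<Rightarrow> bool" where
  "smooth_on S h \<longleftrightarrow> (\<forall>k. Ck_on k S h)"

definition dom :: "real \<Rightarrow> (real \<times> (real^'n)) set" where
  "dom t0 = {t0..} \<times> UNIV"

definition Dpsi :: "real \<Rightarrow> (real \<Rightarrow> real^'n \<Rightarrow> real) \<Rightarrow> real \<Rightarrow> real^'n \<Rightarrow> (real \<times> (real^'n) \<Rightarrow> real)" where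
  "Dpsi t0 \<psi> t x = frechet_derivative (\<lambda>(s,y). \<psi> s y) (at (t,x) within dom t0)"

definition Lf :: "real \<Rightarrow> (real \<Rightarrow> real^'n \<Rightarrow> real^'n) \<Rightarrow> (real \<Rightarrow> real^'n \<Rightarrow> real) \<Rightarrow> real \<Rightarrow> real^'n \<Rightarrow> real" where
  "Lf t0 f \<psi> = (\<lambda>t x. Dpsi t0 \<psi> t x (1, f t x))"

definition Lf_pow :: "real \<Rightarrow> (real \<Rightarrow> real^'n \<Rightarrow> real^'n) \<Rightarrow> nat \<Rightarrow> (real \<Rightarrow> real^'n \<Rightarrow> real) \<Rightarrow> real \<Rightarrow> real^'n \<Rightarrow> real" where
  "Lf_pow t0 f j \<psi> = (Lf t0 f ^^ j) \<psi>"

definition LgLf :: "real \<Rightarrow> (real \<Rightarrow> real^'n \<Rightarrow> real^'n) \<Rightarrow> (real \<Rightarrow> real^'n \<Rightarrow> real^'m^'n)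
     \<Rightarrow> nat \<Rightarrow> (real \<Rightarrow> real^'n \<Rightarrow> real) \<Rightarrow> real \<Rightarrow> real^'n \<Rightarrow> real^'m" where
  "LgLf t0 f g j \<psi> t x = (\<chi> i. Dpsi t0 (Lf_pow t0 f j \<psi>) t x (0, column i (g t x)))"

definition comp :: "(real \<Rightarrow> real^'n \<Rightarrow> real^'r) \<Rightarrow> 'r \<Rightarrow> real \<Rightarrow> real^'n \<Rightarrow> real" where
  "comp \<phi> k = (\<lambda>t x. \<phi> t x $ k)"

definition has_relative_degree :: "real \<Rightarrow> (real \<Rightarrow> real^'n \<Rightarrow> real^'n) \<Rightarrow> (real \<Rightarrow> real^'n \<Rightarrow> real^'m^'n)
     \<Rightarrow> (real \<Rightarrow> real^'n \<Rightarrow> real^'r) \<Rightarrow> ('r \<Rightarrow> nat) \<Rightarrow> bool" where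
  "has_relative_degree t0 f g \<phi> \<rho> \<longleftrightarrow>
     (\<forall>k. 1 \<le> \<rho> k
        \<and> (\<forall>i. i + 2 \<le> \<rho> k \<longrightarrow> (\<forall>(t,x)\<in>dom t0. LgLf t0 f g i (comp \<phi> k) t x = 0))
        \<and> (\<forall>(t,x)\<in>dom t0. LgLf t0 f g (\<rho> k - 1) (comp \<phi> k) t x \<noteq> 0))"

definition Omega_g :: "real \<Rightarrow> (real \<Rightarrow> real^'n \<Rightarrow> real^'n) \<Rightarrow> (real \<Rightarrow> real^'n \<Rightarrow> real^'m^'n)
     \<Rightarrow> (real \<Rightarrow> real^'n \<Rightarrow> real^'r) \<Rightarrow> ('r \<Rightarrow> nat) \<Rightarrow> real \<Rightarrow> real^'n \<Rightarrow> real^'m^'r" where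
  "Omega_g t0 f g \<phi> \<rho> t x = (\<chi> k. LgLf t0 f g (\<rho> k - 1) (comp \<phi> k) t x)"

text \<open>S_{k,i-1} = 1/2 \<Sum>_{j=1}^{i-1} (i choose j) z_k^(i-j) z_k^(j), where zk j = z_k^(j).
  (Note: the argument i of Ssum corresponds to the index i-1 in S_{k,i-1}.)\<close>
definition Ssum :: "(nat \<Rightarrow> real) \<Rightarrow> nat \<Rightarrow> real" where
  "Ssum zk i = (1/2) * (\<Sum>j=1..i-1. real (i choose j) * zk (i - j) * zk j)"

text \<open>\<Omega>_f(t,x,z~): k-th entry S_{k,\<rho>_k-1} + L_f^\<rho>_k \<phi>_k(t,x); z k j = z_k^(j).\<close>
definition Omega_f :: "real \<Rightarrow> (real \<Rightarrow> real^'n \<Rightarrow> real^'n) \<Rightarrow> (real \<Rightarrow> real^'n \<Rightarrow> real^'r)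
     \<Rightarrow> ('r \<Rightarrow> nat) \<Rightarrow> real \<Rightarrow> real^'n \<Rightarrow> ('r \<Rightarrow> nat \<Rightarrow> real) \<Rightarrow> real^'r" where
  "Omega_f t0 f \<phi> \<rho> t x z = (\<chi> k. Ssum (z k) (\<rho> k) + Lf_pow t0 f (\<rho> k) (comp \<phi> k) t x)"

definition Dz :: "('r \<Rightarrow> nat \<Rightarrow> real) \<Rightarrow> real^'r \<Rightarrow> real^'r" where
  "Dz z w = (\<chi> k. z k 0 * w $ k)"

definition feedback :: "real \<Rightarrow> (real \<Rightarrow> real^'n \<Rightarrow> real^'n) \<Rightarrow> (real \<Rightarrow> real^'n \<Rightarrow> real^'m^'n)
     \<Rightarrow> (real \<Rightarrow> real^'n \<Rightarrow> real^'m) \<Rightarrow> ('m \<Rightarrow> nat) \<Rightarrow> real \<Rightarrow> real^'n \<Rightarrow> ('m \<Rightarrow> nat \<Rightarrow> real)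
     \<Rightarrow> real^'m \<Rightarrow> real^'m" where
  "feedback t0 f g \<phi> \<rho> t x z w =
     - (matrix_inv (Omega_g t0 f g \<phi> \<rho> t x) *v (Omega_f t0 f \<phi> \<rho> t x z + Dz z w))"

end

theory Submission
  imports Defs
begin


definition acprop :: "real set \<Rightarrow> (real \<Rightarrow> 'a::real_normed_vector) \<Rightarrow> real \<Rightarrow> real \<Rightarrow> bool" where
  "acprop S h \<epsilon> \<delta> \<longleftrightarrow> (\<forall>D. finite D \<and> (\<forall>(u,v)\<in>D. u \<le> v \<and> {u..v} \<subseteq> S)
        \<and> disjoint_family_on (\<lambda>(u,v). {u<..<v}) D
        \<and> (\<Sum>(u,v)\<in>D. v - u) < \<delta>
        \<longrightarrow> (\<Sum>(u,v)\<in>D. norm (h v - h u)) < \<epsilon>)"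

lemma ac_iff: "absolutely_continuous_on S h \<longleftrightarrow> (\<forall>\<epsilon>>0. \<exists>\<delta>>0. acprop S h \<epsilon> \<delta>)"
  unfolding absolutely_continuous_on_def acprop_def by (rule refl)

lemma acpropD: "acprop S h \<epsilon> \<delta> \<Longrightarrow> finite D \<Longrightarrow> (\<forall>(u,v)\<in>D. u \<le> v \<and> {u..v} \<subseteq> S)
        \<Longrightarrow> disjoint_family_on (\<lambda>(u,v). {u<..<v}) D
        \<Longrightarrow> (\<Sum>(u,v)\<in>D. v - u) < \<delta> \<Longrightarrow> (\<Sum>(u,v)\<in>D. norm (h v - h u)) < \<epsilon>"
  unfolding acprop_def by blast

lemma acpropI: "(\<And>D. finite D \<Longrightarrow> (\<forall>(u,v)\<in>D. u \<le> v \<and> {u..v} \<subseteq> S)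
        \<Longrightarrow> disjoint_family_on (\<lambda>(u,v). {u<..<v}) D
        \<Longrightarrow> (\<Sum>(u,v)\<in>D. v - u) < \<delta> \<Longrightarrow> (\<Sum>(u,v)\<in>D. norm (h v - h u)) < \<epsilon>) \<Longrightarrow> acprop S h \<epsilon> \<delta>"
  unfolding acprop_def by blast

lemma acD: "absolutely_continuous_on S h \<Longrightarrow> \<epsilon> > 0 \<Longrightarrow> \<exists>\<delta>>0. acprop S h \<epsilon> \<delta>"
  unfolding ac_iff by blast

lemma ac_zero_deriv_const:
  fixes e :: "real \<Rightarrow> real"
  assumes ab: "a \<le> b" and ac: "absolutely_continuous_on {a..b} e"
   and N: "negligible N"
   and der: "\<And>t. t \<in> {a..b} - N \<Longrightarrow> (e has_real_derivative 0) (at t within {a..b})"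
  shows "e b = e a"
proof -
  have main: "\<bar>e b - e a\<bar> \<le> \<epsilon> * (b - a + 1)" if "\<epsilon> > 0" for \<epsilon>
  proof -
    obtain \<delta> where "\<delta> > 0" and acd0: "acprop {a..b} e \<epsilon> \<delta>"
      using acD[OF ac \<open>\<epsilon> > 0\<close>] by blast
    note acd = acpropD[OF acd0]
    have "(indicator N has_integral (0::real)) (cbox a b)"
      using N unfolding negligible_def by blast
    from has_integral[THEN iffD1, OF this, rule_format, OF \<open>\<delta> > 0\<close>]
    obtain \<gamma>N where "gauge \<gamma>N" and \<gamma>N0: "\<forall>\<D>. \<D> tagged_division_of (cbox a b) \<and> \<gamma>N fine \<D> \<longrightarrow>
        norm ((\<Sum>(x, k)\<in>\<D>. Henstock_Kurzweil_Integration.content k *\<^sub>R (indicator N x :: real)) - 0) < \<delta>"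
      by blast
    have "\<forall>t\<in>{a..b}-N. \<exists>r>0. \<forall>s\<in>{a..b}. \<bar>s - t\<bar> < r \<longrightarrow> \<bar>e s - e t\<bar> \<le> \<epsilon> * \<bar>s - t\<bar>"
    proof
      fix t assume "t \<in> {a..b} - N"
      from der[OF this] have "(e has_derivative (*) 0) (at t within {a..b})"
        by (simp add: has_field_derivative_def)
      then show "\<exists>r>0. \<forall>s\<in>{a..b}. \<bar>s - t\<bar> < r \<longrightarrow> \<bar>e s - e t\<bar> \<le> \<epsilon> * \<bar>s - t\<bar>"
        unfolding has_derivative_within_alt using \<open>\<epsilon> > 0\<close> by auto
    qed
    then obtain r where r: "\<And>t. t\<in>{a..b}-N \<Longrightarrow> r t > 0"
      and rr: "\<And>t s. t\<in>{a..b}-N \<Longrightarrow> s\<in>{a..b} \<Longrightarrow> \<bar>s - t\<bar> < r t \<Longrightarrow> \<bar>e s - e t\<bar> \<le> \<epsilon> * \<bar>s - t\<bar>"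
      by metis
    define \<gamma>E where "\<gamma>E t = (if t \<in> {a..b} - N then ball t (r t) else UNIV)" for t
    have "gauge \<gamma>E" unfolding gauge_def \<gamma>E_def using r by auto
    then have "gauge (\<lambda>t. \<gamma>N t \<inter> \<gamma>E t)" using \<open>gauge \<gamma>N\<close> by (simp add: gauge_Int)
    then obtain \<D> where \<D>: "\<D> tagged_division_of {a..b}" and fine: "(\<lambda>t. \<gamma>N t \<inter> \<gamma>E t) fine \<D>"
      by (rule fine_division_exists_real)
    have fN: "\<gamma>N fine \<D>" and fE: "\<gamma>E fine \<D>" using fine fine_Int by blast+
    have fin: "finite \<D>" using tagged_division_ofD(1)[OF \<D>] .
    have K0: "\<exists>u v. K = {u..v} \<and> u \<le> v \<and> u \<le> x \<and> x \<le> v \<and> a \<le> u \<and> v \<le> b" if "(x,K) \<in> \<D>" for x K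
    proof -
      have "x \<in> K" "K \<subseteq> {a..b}" "\<exists>u v. K = cbox u v"
        using tagged_division_ofD(2)[OF \<D> that] tagged_division_ofD(3)[OF \<D> that] tagged_division_ofD(4)[OF \<D> that]
        by auto
      then obtain u v where uv: "K = cbox u v" "x \<in> K" "K \<subseteq> {a..b}" by blast
      then have "K = {u..v}" "u \<le> x" "x \<le> v" by auto
      moreover have "a \<le> u" "v \<le> b" using uv calculation by auto
      ultimately show ?thesis by (intro exI[of _ u] exI[of _ v]) auto
    qed
    have KI: "Inf K \<le> x" "x \<le> Sup K" "a \<le> Inf K" "Sup K \<le> b"
        "interior K = {Inf K<..<Sup K}" "Henstock_Kurzweil_Integration.content K = Sup K - Inf K"
        if xK: "(x,K) \<in> \<D>" for x K
    proof -
      obtain u v where uv: "K = {u..v}" "u \<le> v" "u \<le> x" "x \<le> v" "a \<le> u" "v \<le> b" using K0[OF xK] by blast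
      have "Inf K = u" "Sup K = v" using uv(1,2) by simp_all
      then show "Inf K \<le> x" "x \<le> Sup K" "a \<le> Inf K" "Sup K \<le> b"
        "interior K = {Inf K<..<Sup K}" "Henstock_Kurzweil_Integration.content K = Sup K - Inf K"
        using uv by (simp_all add: content_real)
    qed
    have KE: "K = {Inf K..Sup K}" if xK: "(x,K) \<in> \<D>" for x K
    proof -
      obtain u v where uv: "K = {u..v}" "u \<le> v" using K0[OF xK] by blast
      then show ?thesis by simp
    qed
    define \<D>1 where "\<D>1 = {p \<in> \<D>. fst p \<in> N}"
    define \<D>2 where "\<D>2 = {p \<in> \<D>. fst p \<notin> N}"
    have split: "\<D> = \<D>1 \<union> \<D>2" "\<D>1 \<inter> \<D>2 = {}" unfolding \<D>1_def \<D>2_def by auto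
    have fin1: "finite \<D>1" and fin2: "finite \<D>2" using fin unfolding \<D>1_def \<D>2_def by auto
    have "e b - e a = (\<Sum>(x,K)\<in>\<D>. e (Sup K) - e (Inf K))"
      by (rule additive_tagged_division_1[OF ab \<D>, symmetric])
    also have "\<dots> = (\<Sum>(x,K)\<in>\<D>1. e (Sup K) - e (Inf K)) + (\<Sum>(x,K)\<in>\<D>2. e (Sup K) - e (Inf K))"
      using split fin1 fin2 by (simp add: sum.union_disjoint)
    finally have eq: "e b - e a = \<dots>" .
    have b2: "\<bar>\<Sum>(x,K)\<in>\<D>2. e (Sup K) - e (Inf K)\<bar> \<le> \<epsilon> * (b - a)"
    proof -
      have "\<bar>\<Sum>(x,K)\<in>\<D>2. e (Sup K) - e (Inf K)\<bar> \<le> (\<Sum>(x,K)\<in>\<D>2. \<bar>e (Sup K) - e (Inf K)\<bar>)"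
        by (rule order_trans[OF sum_abs]) (simp add: case_prod_beta)
      also have "\<dots> \<le> (\<Sum>(x,K)\<in>\<D>2. \<epsilon> * Henstock_Kurzweil_Integration.content K)"
      proof (rule sum_mono)
        fix p assume p: "p \<in> \<D>2"
        obtain x K where pe: "p = (x,K)" by fastforce
        have xK: "(x,K) \<in> \<D>" "x \<notin> N" using p pe unfolding \<D>2_def by auto
        note KK = KI[OF xK(1)]
        have xin: "x \<in> {a..b} - N" using KK xK by auto
        have "K \<subseteq> ball x (r x)" using fE xK(1) xin unfolding fine_def \<gamma>E_def by fastforce
        moreover have "Sup K \<in> K" "Inf K \<in> K" using KK KE[OF xK(1)] by (metis atLeastAtMost_iff order_refl order_trans)+
        ultimately have d1: "\<bar>Sup K - x\<bar> < r x" and d2: "\<bar>Inf K - x\<bar> < r x"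
          by (auto simp: subset_iff dist_real_def)
        have i1: "Sup K \<in> {a..b}" "Inf K \<in> {a..b}" using KK by auto
        have "\<bar>e (Sup K) - e x\<bar> \<le> \<epsilon> * \<bar>Sup K - x\<bar>" using rr[OF xin i1(1) d1] .
        moreover have "\<bar>e (Inf K) - e x\<bar> \<le> \<epsilon> * \<bar>Inf K - x\<bar>" using rr[OF xin i1(2) d2] .
        moreover have "Inf K \<le> x" "x \<le> Sup K" using KK by auto
        ultimately have "\<bar>e (Sup K) - e (Inf K)\<bar> \<le> \<epsilon> * (Sup K - Inf K)"
          by (simp add: abs_if split: if_splits; smt (verit, ccfv_SIG) distrib_left)
        then show "(case p of (x,K) \<Rightarrow> \<bar>e (Sup K) - e (Inf K)\<bar>) \<le> (case p of (x,K) \<Rightarrow> \<epsilon> * Henstock_Kurzweil_Integration.content K)"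
          using pe KK by simp
      qed
      also have "\<dots> \<le> (\<Sum>(x,K)\<in>\<D>. \<epsilon> * Henstock_Kurzweil_Integration.content K)"
        using split fin \<open>\<epsilon>>0\<close> by (intro sum_mono2) auto
      also have "\<dots> = \<epsilon> * (b - a)"
      proof -
        have "\<D> tagged_division_of cbox a b" using \<D> by simp
        from additive_content_tagged_division[OF this] ab show ?thesis
          by (simp add: sum_distrib_left[symmetric] case_prod_beta)
      qed
      finally show ?thesis .
    qed
    have b1: "\<bar>\<Sum>(x,K)\<in>\<D>1. e (Sup K) - e (Inf K)\<bar> < \<epsilon>"
    proof -
      define h where "h = (\<lambda>(x::real,K::real set). (Inf K, Sup K))"
      define D where "D = h ` \<D>1"
      have "\<bar>\<Sum>(x,K)\<in>\<D>1. e (Sup K) - e (Inf K)\<bar> \<le> (\<Sum>(x,K)\<in>\<D>1. \<bar>e (Sup K) - e (Inf K)\<bar>)"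
        by (rule order_trans[OF sum_abs]) (simp add: case_prod_beta)
      also have "\<dots> = (\<Sum>(u,v)\<in>D. norm (e v - e u))"
        unfolding D_def
      proof (subst sum.reindex_nontrivial[OF fin1])
        fix p q assume pq: "p \<in> \<D>1" "q \<in> \<D>1" "p \<noteq> q" "h p = h q"
        obtain x K where pe: "p = (x,K)" by fastforce
        obtain y L where qe: "q = (y,L)" by fastforce
        have in\<D>: "(x,K) \<in> \<D>" "(y,L) \<in> \<D>" using pq pe qe unfolding \<D>1_def by auto
        have "Inf K = Inf L" "Sup K = Sup L" using pq(4) pe qe unfolding h_def by auto
        then have "K = L" using KE[OF in\<D>(1)] KE[OF in\<D>(2)] by metis
        then have "interior K = {}" using \<D> in\<D> pq(3) pe qe by (metis Int_absorb tagged_division_ofD(5))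
        then have "Sup K = Inf K" using KI[OF in\<D>(1)]
          by (metis greaterThanLessThan_empty_iff order_antisym_conv order_trans)
        then show "(case h p of (u, v) \<Rightarrow> norm (e v - e u)) = 0" using pe unfolding h_def by simp
      qed (simp add: h_def case_prod_beta comp_def)
      also have "\<dots> < \<epsilon>"
      proof (rule acd)
        show "finite D" using fin1 D_def by simp
        show "\<forall>(u,v)\<in>D. u \<le> v \<and> {u..v} \<subseteq> {a..b}"
        proof
          fix m assume "m \<in> D"
          then obtain x K where m: "m = (Inf K, Sup K)" "(x,K) \<in> \<D>"
            unfolding D_def h_def \<D>1_def by auto
          show "case m of (u,v) \<Rightarrow> u \<le> v \<and> {u..v} \<subseteq> {a..b}" using KI[OF m(2)] m(1) by auto
        qed
        show "disjoint_family_on (\<lambda>(u,v). {u<..<v}) D"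
          unfolding disjoint_family_on_def
        proof (intro ballI impI)
          fix m n assume mn: "m \<in> D" "n \<in> D" "m \<noteq> n"
          then obtain x K y L where m: "m = (Inf K, Sup K)" "(x,K) \<in> \<D>" and n: "n = (Inf L, Sup L)" "(y,L) \<in> \<D>"
            unfolding D_def h_def \<D>1_def by auto
          have "(x,K) \<noteq> (y,L)" using mn m n by auto
          then have "interior K \<inter> interior L = {}" using \<D> m n by (metis tagged_division_ofD(5))
          moreover have "interior K = {Inf K<..<Sup K}" "interior L = {Inf L<..<Sup L}"
            using KI[OF m(2)] KI[OF n(2)] by simp_all
          ultimately show "(case m of (u,v) \<Rightarrow> {u<..<v}) \<inter> (case n of (u,v) \<Rightarrow> {u<..<v}) = {}"
            using m n by simp
        qed
        have "(\<Sum>(u,v)\<in>D. v - u) \<le> (\<Sum>(x,K)\<in>\<D>1. Sup K - Inf K)"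
        proof -
          have "\<And>p. p \<in> \<D>1 \<Longrightarrow> 0 \<le> (case h p of (u,v) \<Rightarrow> v - u)"
          proof -
            fix p assume "p \<in> \<D>1"
            then obtain x K where "p = (x,K)" "(x,K) \<in> \<D>" unfolding \<D>1_def by (cases p) auto
            then show "0 \<le> (case h p of (u,v) \<Rightarrow> v - u)" using KI[of x K] unfolding h_def by auto
          qed
          from sum_image_le[OF fin1, of "\<lambda>(u,v). v - u" h, OF this] show ?thesis
            unfolding D_def by (simp add: h_def comp_def case_prod_beta)
        qed
        also have "\<dots> = (\<Sum>(x,K)\<in>\<D>1. Henstock_Kurzweil_Integration.content K)"
          using KI unfolding \<D>1_def by (intro sum.cong) auto
        also have "\<dots> = (\<Sum>(x, k)\<in>\<D>. Henstock_Kurzweil_Integration.content k *\<^sub>R (indicator N x :: real))"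
          unfolding \<D>1_def
          by (simp only: sum.inter_filter[OF fin]) (auto simp: indicator_def case_prod_beta intro!: sum.cong)
        also have "\<dots> < \<delta>"
        proof -
          have "\<D> tagged_division_of cbox a b" using \<D> by simp
          from \<gamma>N0[rule_format, OF conjI[OF this fN]] show ?thesis by simp
        qed
        finally show "(\<Sum>(u,v)\<in>D. v - u) < \<delta>" .
      qed
      finally show ?thesis .
    qed
    show ?thesis using eq b1 b2 by (simp add: algebra_simps)
  qed
  show ?thesis
  proof (rule ccontr)
    assume "e b \<noteq> e a"
    then have d: "\<bar>e b - e a\<bar> > 0" by simp
    define \<epsilon> where "\<epsilon> = \<bar>e b - e a\<bar> / (2 * (b - a + 1))"
    have "\<epsilon> > 0" using d ab unfolding \<epsilon>_def by simp
    from main[OF this] have "\<bar>e b - e a\<bar> \<le> \<bar>e b - e a\<bar> / (2 * (b - a + 1)) * (b - a + 1)"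
      unfolding \<epsilon>_def .
    also have "\<dots> = \<bar>e b - e a\<bar> / 2" using ab by (simp add: field_simps)
    finally show False using d by (smt (verit) field_sum_of_halves)
  qed
qed



lemma Ck_mono: "Ck_on (Suc k) S h \<Longrightarrow> Ck_on k S h"
proof (induction k arbitrary: h)
  case 0
  then obtain h' where "\<forall>p\<in>S. (h has_derivative h' p) (at p within S)" by auto
  then show ?case
    by (auto simp: continuous_on_eq_continuous_within intro: has_derivative_continuous)
next
  case (Suc k)
  then obtain h' where "\<forall>p\<in>S. (h has_derivative h' p) (at p within S)" "\<forall>v. Ck_on (Suc k) S (\<lambda>p. h' p v)"
    by auto
  then show ?case using Suc.IH by auto
qed

lemma Ck_cong: "Ck_on k S h \<Longrightarrow> (\<And>p. p \<in> S \<Longrightarrow> h p = h2 p) \<Longrightarrow> Ck_on k S h2"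
proof (induction k arbitrary: h h2)
  case 0
  then show ?case using continuous_on_cong by (metis Ck_on.simps(1))
next
  case (Suc k)
  then obtain h' where "\<forall>p\<in>S. (h has_derivative h' p) (at p within S)" "\<forall>v. Ck_on k S (\<lambda>p. h' p v)"
    by auto
  moreover have "\<forall>p\<in>S. (h2 has_derivative h' p) (at p within S)"
    using calculation(1) Suc.prems(2) by (metis has_derivative_transform)
  ultimately show ?case by auto
qed

lemma Ck_const: "Ck_on k S (\<lambda>p. c)"
proof (induction k arbitrary: c)
  case 0 then show ?case by simp
next
  case (Suc k)
  have "\<forall>p\<in>S. ((\<lambda>p. c) has_derivative (\<lambda>p v. 0) p) (at p within S)" by simp
  then show ?case using Suc unfolding Ck_on.simps(2) by (intro exI[where x="\<lambda>p v. 0"]) simp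
qed

lemma Ck_add: "Ck_on k S h1 \<Longrightarrow> Ck_on k S h2 \<Longrightarrow> Ck_on k S (\<lambda>p. h1 p + h2 p)"
proof (induction k arbitrary: h1 h2)
  case 0 then show ?case by (simp add: continuous_on_add)
next
  case (Suc k)
  from Suc.prems obtain h1' h2' where
    d1: "\<forall>p\<in>S. (h1 has_derivative h1' p) (at p within S)" "\<forall>v. Ck_on k S (\<lambda>p. h1' p v)" and
    d2: "\<forall>p\<in>S. (h2 has_derivative h2' p) (at p within S)" "\<forall>v. Ck_on k S (\<lambda>p. h2' p v)"
    by auto
  have "\<forall>p\<in>S. ((\<lambda>p. h1 p + h2 p) has_derivative (\<lambda>p v. h1' p v + h2' p v) p) (at p within S)"
    using d1 d2 by (auto intro: has_derivative_add)
  moreover have "\<forall>v. Ck_on k S (\<lambda>p. h1' p v + h2' p v)" using d1 d2 Suc.IH by auto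
  ultimately show ?case unfolding Ck_on.simps(2) by (intro exI[where x="\<lambda>p v. h1' p v + h2' p v"]) simp
qed

lemma Ck_linear: "bounded_linear L \<Longrightarrow> Ck_on k S h \<Longrightarrow> Ck_on k S (\<lambda>p. L (h p))"
proof (induction k arbitrary: h)
  case 0 then show ?case
    by (simp add: linear_continuous_on continuous_on_compose2[of UNIV L] )
next
  case (Suc k)
  from Suc.prems obtain h' where
    d1: "\<forall>p\<in>S. (h has_derivative h' p) (at p within S)" "\<forall>v. Ck_on k S (\<lambda>p. h' p v)"
    by auto
  have "\<forall>p\<in>S. ((\<lambda>p. L (h p)) has_derivative (\<lambda>p v. L (h' p v)) p) (at p within S)"
    using d1 Suc.prems(1) by (auto intro: bounded_linear.has_derivative)
  moreover have "\<forall>v. Ck_on k S (\<lambda>p. L (h' p v))" using d1 Suc by auto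
  ultimately show ?case unfolding Ck_on.simps(2) by (intro exI[where x="\<lambda>p v. L (h' p v)"]) simp
qed

lemma Ck_mult:
  fixes h1 h2 :: "'a::real_normed_vector \<Rightarrow> real"
  shows "Ck_on k S h1 \<Longrightarrow> Ck_on k S h2 \<Longrightarrow> Ck_on k S (\<lambda>p. h1 p * h2 p)"
proof (induction k arbitrary: h1 h2)
  case 0 then show ?case by (simp add: continuous_on_mult)
next
  case (Suc k)
  from Suc.prems obtain h1' h2' where
    d1: "\<forall>p\<in>S. (h1 has_derivative h1' p) (at p within S)" "\<forall>v. Ck_on k S (\<lambda>p. h1' p v)" and
    d2: "\<forall>p\<in>S. (h2 has_derivative h2' p) (at p within S)" "\<forall>v. Ck_on k S (\<lambda>p. h2' p v)"
    by auto
  have "\<forall>p\<in>S. ((\<lambda>p. h1 p * h2 p) has_derivative (\<lambda>p v. h1 p * h2' p v + h1' p v * h2 p) p) (at p within S)"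
    using d1 d2 by (auto intro: has_derivative_mult)
  moreover have "\<forall>v. Ck_on k S (\<lambda>p. h1 p * h2' p v + h1' p v * h2 p)"
  proof
    fix v
    have m: "Ck_on k S h1" "Ck_on k S h2" using Ck_mono[OF Suc.prems(1)] Ck_mono[OF Suc.prems(2)] .
    show "Ck_on k S (\<lambda>p. h1 p * h2' p v + h1' p v * h2 p)"
      by (rule Ck_add[OF Suc.IH[OF m(1) d2(2)[rule_format]] Suc.IH[OF d1(2)[rule_format] m(2)]])
  qed
  ultimately show ?case unfolding Ck_on.simps(2) by (intro exI[where x="\<lambda>p v. h1 p * h2' p v + h1' p v * h2 p"]) simp
qed

lemma Ck_sum: "finite I \<Longrightarrow> (\<And>i. i \<in> I \<Longrightarrow> Ck_on k S (h i)) \<Longrightarrow> Ck_on k S (\<lambda>p. \<Sum>i\<in>I. h i p)"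
  by (induction I rule: finite_induct) (auto intro: Ck_add Ck_const)

lemma smooth_cong: "smooth_on S h \<Longrightarrow> (\<And>p. p \<in> S \<Longrightarrow> h p = h2 p) \<Longrightarrow> smooth_on S h2"
  unfolding smooth_on_def using Ck_cong by metis
lemma smooth_const: "smooth_on S (\<lambda>p. c)" unfolding smooth_on_def using Ck_const by metis
lemma smooth_add: "smooth_on S h1 \<Longrightarrow> smooth_on S h2 \<Longrightarrow> smooth_on S (\<lambda>p. h1 p + h2 p)"
  unfolding smooth_on_def using Ck_add by metis
lemma smooth_linear: "bounded_linear L \<Longrightarrow> smooth_on S h \<Longrightarrow> smooth_on S (\<lambda>p. L (h p))"
  unfolding smooth_on_def using Ck_linear by metis
lemma smooth_mult:
  fixes h1 h2 :: "'a::real_normed_vector \<Rightarrow> real"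
  shows "smooth_on S h1 \<Longrightarrow> smooth_on S h2 \<Longrightarrow> smooth_on S (\<lambda>p. h1 p * h2 p)"
  unfolding smooth_on_def using Ck_mult by metis
lemma smooth_sum: "finite I \<Longrightarrow> (\<And>i. i \<in> I \<Longrightarrow> smooth_on S (h i)) \<Longrightarrow> smooth_on S (\<lambda>p. \<Sum>i\<in>I. h i p)"
  unfolding smooth_on_def using Ck_sum by metis

lemma dom_unique:
  fixes H :: "real \<times> (real^'n) \<Rightarrow> 'b::real_normed_vector"
  assumes "p \<in> dom t0" "(H has_derivative A) (at p within dom t0)" "(H has_derivative B) (at p within dom t0)"
  shows "A = B"
proof (rule frechet_derivative_unique_within[OF assms(2,3)])
  fix i :: "real \<times> (real^'n)" and e :: real assume i: "i \<in> Basis" and e: "e > 0"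
  show "\<exists>d. 0 < \<bar>d\<bar> \<and> \<bar>d\<bar> < e \<and> p + d *\<^sub>R i \<in> dom t0"
  proof (intro exI conjI)
    show "0 < \<bar>e/2\<bar>" "\<bar>e/2\<bar> < e" using e by auto
    have "fst i \<ge> 0" using i by (auto simp: Basis_prod_def)
    moreover have "fst p \<ge> t0" using assms(1) by (auto simp: dom_def mem_Times_iff)
    moreover have "e * fst i / 2 \<ge> 0" using e \<open>fst i \<ge> 0\<close> by simp
    ultimately have "fst (p + (e/2) *\<^sub>R i) \<ge> t0" by simp
    then show "p + (e/2) *\<^sub>R i \<in> dom t0" by (simp add: dom_def mem_Times_iff)
  qed
qed

lemma smooth_deriv:
  fixes H :: "real \<times> (real^'n) \<Rightarrow> 'b::real_normed_vector"
  assumes "smooth_on (dom t0) H"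
  shows "\<And>p. p \<in> dom t0 \<Longrightarrow> (H has_derivative frechet_derivative H (at p within dom t0)) (at p within dom t0)"
    and "\<And>v. smooth_on (dom t0) (\<lambda>p. frechet_derivative H (at p within dom t0) v)"
proof -
  have C1: "Ck_on (Suc 0) (dom t0) H" using assms smooth_on_def by blast
  then obtain h' where "\<forall>p\<in>dom t0. (H has_derivative h' p) (at p within dom t0)" by auto
  then show H: "\<And>p. p \<in> dom t0 \<Longrightarrow> (H has_derivative frechet_derivative H (at p within dom t0)) (at p within dom t0)"
    by (meson differentiable_def frechet_derivative_works)
  fix v
  show "smooth_on (dom t0) (\<lambda>p. frechet_derivative H (at p within dom t0) v)"
    unfolding smooth_on_def
  proof
    fix k
    have "Ck_on (Suc k) (dom t0) H" using assms smooth_on_def by blast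
    then obtain h' where d: "\<forall>p\<in>dom t0. (H has_derivative h' p) (at p within dom t0)" "\<forall>v. Ck_on k (dom t0) (\<lambda>p. h' p v)"
      by auto
    have "\<And>p. p \<in> dom t0 \<Longrightarrow> h' p v = frechet_derivative H (at p within dom t0) v"
      using dom_unique d(1) H by metis
    then show "Ck_on k (dom t0) (\<lambda>p. frechet_derivative H (at p within dom t0) v)"
      using Ck_cong[OF d(2)[rule_format, of v]] by metis
  qed
qed



lemma pair_expand:
  fixes y :: "real^'n"
  shows "((1::real), y) = (1,0) + (\<Sum>i\<in>UNIV. y$i *\<^sub>R ((0::real), axis i (1::real)))"
proof -
  have "(\<Sum>i\<in>UNIV. y$i *\<^sub>R ((0::real), axis i (1::real))) = (0, \<Sum>i\<in>UNIV. y$i *\<^sub>R axis i 1)"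
    by (simp add: prod_eq_iff fst_sum snd_sum)
  also have "(\<Sum>i\<in>UNIV. y$i *\<^sub>R axis i (1::real)) = y"
    using basis_expansion[of y] by (simp add: scalar_mult_eq_scaleR)
  finally show ?thesis by simp
qed

lemma linear_pair_expand:
  fixes y :: "real^'n" and L :: "real \<times> (real^'n) \<Rightarrow> real"
  assumes "linear L"
  shows "L (1, y) = L (1,0) + (\<Sum>i\<in>UNIV. y$i * L (0, axis i 1))"
proof -
  have "L (1, y) = L (1,0) + L (\<Sum>i\<in>UNIV. y$i *\<^sub>R ((0::real), axis i (1::real)))"
    by (subst pair_expand) (simp only: linear_add[OF assms])
  also have "L (\<Sum>i\<in>UNIV. y$i *\<^sub>R ((0::real), axis i (1::real))) = (\<Sum>i\<in>UNIV. L (y$i *\<^sub>R ((0::real), axis i (1::real))))"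
    by (simp only: linear_sum[OF assms] o_def)
  also have "\<dots> = (\<Sum>i\<in>UNIV. y$i * L ((0::real), axis i (1::real)))"
    by (simp only: linear_scale[OF assms] real_scaleR_def)
  finally show ?thesis .
qed

lemma Lf_smooth:
  fixes f :: "real \<Rightarrow> real^'n \<Rightarrow> real^'n" and \<psi> :: "real \<Rightarrow> real^'n \<Rightarrow> real"
  assumes fs: "smooth_on (dom t0) (\<lambda>(t,y). f t y)" and ps: "smooth_on (dom t0) (\<lambda>(t,y). \<psi> t y)"
  shows "smooth_on (dom t0) (\<lambda>(t,y). Lf t0 f \<psi> t y)"
proof -
  define D where "D p = frechet_derivative (\<lambda>(s,y). \<psi> s y) (at p within dom t0)" for p
  have der: "\<And>p. p \<in> dom t0 \<Longrightarrow> ((\<lambda>(s,y). \<psi> s y) has_derivative D p) (at p within dom t0)"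
    using smooth_deriv(1)[OF ps] unfolding D_def by blast
  have Ds: "\<And>v. smooth_on (dom t0) (\<lambda>p. D p v)"
    using smooth_deriv(2)[OF ps] unfolding D_def by blast
  have fi: "\<And>i. smooth_on (dom t0) (\<lambda>p. (case p of (t,y) \<Rightarrow> f t y) $ i)"
    using smooth_linear[OF bounded_linear_vec_nth fs] by blast
  have "smooth_on (dom t0) (\<lambda>p. D p (1,0) + (\<Sum>i\<in>UNIV. (case p of (t,y) \<Rightarrow> f t y) $ i * D p (0, axis i 1)))"
    by (intro smooth_add smooth_sum smooth_mult Ds fi) auto
  moreover have "\<And>p. p \<in> dom t0 \<Longrightarrow> D p (1,0) + (\<Sum>i\<in>UNIV. (case p of (t,y) \<Rightarrow> f t y) $ i * D p (0, axis i 1))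
      = (\<lambda>(t,y). Lf t0 f \<psi> t y) p"
  proof -
    fix p :: "real \<times> (real^'n)" assume p: "p \<in> dom t0"
    obtain t y where pe: "p = (t,y)" by fastforce
    have "linear (D p)" using der[OF p] has_derivative_linear by blast
    then show "D p (1,0) + (\<Sum>i\<in>UNIV. (case p of (t,y) \<Rightarrow> f t y) $ i * D p (0, axis i 1))
      = (\<lambda>(t,y). Lf t0 f \<psi> t y) p"
      using linear_pair_expand[of "D p" "f t y"] pe
      by (simp add: Lf_def Dpsi_def D_def)
  qed
  ultimately show ?thesis by (rule smooth_cong)
qed

lemma Lf_pow_Suc: "Lf_pow t0 f (Suc j) \<psi> = Lf t0 f (Lf_pow t0 f j \<psi>)"
  by (simp add: Lf_pow_def)

lemma Lf_pow_0: "Lf_pow t0 f 0 \<psi> = \<psi>"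
  by (simp add: Lf_pow_def)

lemma Lf_pow_smooth:
  fixes f :: "real \<Rightarrow> real^'n \<Rightarrow> real^'n" and \<psi> :: "real \<Rightarrow> real^'n \<Rightarrow> real"
  assumes fs: "smooth_on (dom t0) (\<lambda>(t,y). f t y)" and ps: "smooth_on (dom t0) (\<lambda>(t,y). \<psi> t y)"
  shows "smooth_on (dom t0) (\<lambda>(t,y). Lf_pow t0 f j \<psi> t y)"
proof (induction j)
  case 0 then show ?case using ps by (simp add: Lf_pow_0)
next
  case (Suc j) then show ?case using Lf_smooth[OF fs Suc] by (simp add: Lf_pow_Suc)
qed



lemma acD2: "absolutely_continuous_on S h \<Longrightarrow> \<epsilon> > 0 \<Longrightarrow> \<exists>\<delta>>0. \<forall>D. finite D \<and> (\<forall>(u,v)\<in>D. u \<le> v \<and> {u..v} \<subseteq> S)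
        \<and> disjoint_family_on (\<lambda>(u,v). {u<..<v}) D \<and> (\<Sum>(u,v)\<in>D. v - u) < \<delta>
        \<longrightarrow> (\<Sum>(u,v)\<in>D. norm (h v - h u)) < \<epsilon>"
  by (simp add: absolutely_continuous_on_def)

lemma ac_bound:
  fixes h1 :: "real \<Rightarrow> 'a::real_normed_vector" and h2 :: "real \<Rightarrow> 'c::real_normed_vector" and k :: "real \<Rightarrow> 'b::real_normed_vector"
  assumes a1: "absolutely_continuous_on S h1" and a2: "absolutely_continuous_on S h2"
    and B: "\<And>u v. u \<in> S \<Longrightarrow> v \<in> S \<Longrightarrow> u \<le> v \<Longrightarrow> norm (k v - k u) \<le> B * (norm (h1 v - h1 u) + norm (h2 v - h2 u))"
  shows "absolutely_continuous_on S k"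
  unfolding absolutely_continuous_on_def
proof (intro allI impI)
  fix \<epsilon> :: real assume e: "\<epsilon> > 0"
  define B' where "B' = \<bar>B\<bar> + 1"
  have B': "B' > 0" "B \<le> B'" unfolding B'_def by auto
  have e': "\<epsilon> / (2 * B') > 0" using e B' by simp
  obtain \<delta>1 where d1: "\<delta>1 > 0" "\<forall>D. finite D \<and> (\<forall>(u,v)\<in>D. u \<le> v \<and> {u..v} \<subseteq> S)
        \<and> disjoint_family_on (\<lambda>(u,v). {u<..<v}) D \<and> (\<Sum>(u,v)\<in>D. v - u) < \<delta>1
        \<longrightarrow> (\<Sum>(u,v)\<in>D. norm (h1 v - h1 u)) < \<epsilon> / (2 * B')"
    using acD2[OF a1 e'] by blast
  obtain \<delta>2 where d2: "\<delta>2 > 0" "\<forall>D. finite D \<and> (\<forall>(u,v)\<in>D. u \<le> v \<and> {u..v} \<subseteq> S)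
        \<and> disjoint_family_on (\<lambda>(u,v). {u<..<v}) D \<and> (\<Sum>(u,v)\<in>D. v - u) < \<delta>2
        \<longrightarrow> (\<Sum>(u,v)\<in>D. norm (h2 v - h2 u)) < \<epsilon> / (2 * B')"
    using acD2[OF a2 e'] by blast
  show "\<exists>\<delta>>0. \<forall>D. finite D \<and> (\<forall>(u,v)\<in>D. u \<le> v \<and> {u..v} \<subseteq> S)
        \<and> disjoint_family_on (\<lambda>(u,v). {u<..<v}) D \<and> (\<Sum>(u,v)\<in>D. v - u) < \<delta>
        \<longrightarrow> (\<Sum>(u,v)\<in>D. norm (k v - k u)) < \<epsilon>"
  proof (intro exI conjI allI impI)
    show "min \<delta>1 \<delta>2 > 0" using d1 d2 by simp
    fix D :: "(real \<times> real) set"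
    assume D: "finite D \<and> (\<forall>(u,v)\<in>D. u \<le> v \<and> {u..v} \<subseteq> S)
        \<and> disjoint_family_on (\<lambda>(u,v). {u<..<v}) D \<and> (\<Sum>(u,v)\<in>D. v - u) < min \<delta>1 \<delta>2"
    have s1: "(\<Sum>(u,v)\<in>D. norm (h1 v - h1 u)) < \<epsilon> / (2 * B')" using d1(2) D by auto
    have s2: "(\<Sum>(u,v)\<in>D. norm (h2 v - h2 u)) < \<epsilon> / (2 * B')" using d2(2) D by auto
    have "(\<Sum>(u,v)\<in>D. norm (k v - k u)) \<le> (\<Sum>(u,v)\<in>D. B' * (norm (h1 v - h1 u) + norm (h2 v - h2 u)))"
    proof (rule sum_mono)
      fix p assume p: "p \<in> D"
      obtain u v where pe: "p = (u,v)" by fastforce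
      have uv0: "u \<le> v" "{u..v} \<subseteq> S" using D p pe by auto
      then have uv: "u \<le> v" "u \<in> S" "v \<in> S" by auto
      have "norm (k v - k u) \<le> B * (norm (h1 v - h1 u) + norm (h2 v - h2 u))" using B uv by blast
      also have "\<dots> \<le> B' * (norm (h1 v - h1 u) + norm (h2 v - h2 u))"
        using B' by (intro mult_right_mono) auto
      finally show "(case p of (u,v) \<Rightarrow> norm (k v - k u)) \<le> (case p of (u,v) \<Rightarrow> B' * (norm (h1 v - h1 u) + norm (h2 v - h2 u)))"
        using pe by simp
    qed
    also have "\<dots> = B' * ((\<Sum>(u,v)\<in>D. norm (h1 v - h1 u)) + (\<Sum>(u,v)\<in>D. norm (h2 v - h2 u)))"
      by (simp add: sum_distrib_left sum.distrib case_prod_beta distrib_left)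
    also have "\<dots> < B' * (\<epsilon> / (2 * B') + \<epsilon> / (2 * B'))"
      using s1 s2 B' by (intro mult_strict_left_mono) auto
    also have "\<dots> = \<epsilon>" using B' by (simp add: field_simps)
    finally show "(\<Sum>(u,v)\<in>D. norm (k v - k u)) < \<epsilon>" .
  qed
qed

lemma ac_id: "absolutely_continuous_on S (\<lambda>t::real. t)"
  unfolding absolutely_continuous_on_def
proof (intro allI impI)
  fix \<epsilon> :: real assume "\<epsilon> > 0"
  then show "\<exists>\<delta>>0. \<forall>D. finite D \<and> (\<forall>(u,v)\<in>D. u \<le> v \<and> {u..v} \<subseteq> S)
        \<and> disjoint_family_on (\<lambda>(u,v). {u<..<v}) D \<and> (\<Sum>(u,v)\<in>D. v - u) < \<delta>
        \<longrightarrow> (\<Sum>(u,v)\<in>D. norm (v - u)) < \<epsilon>"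
  proof (intro exI[of _ \<epsilon>] conjI allI impI)
    fix D :: "(real \<times> real) set"
    assume D: "finite D \<and> (\<forall>(u,v)\<in>D. u \<le> v \<and> {u..v} \<subseteq> S)
        \<and> disjoint_family_on (\<lambda>(u,v). {u<..<v}) D \<and> (\<Sum>(u,v)\<in>D. v - u) < \<epsilon>"
    have "(\<Sum>(u,v)\<in>D. norm (v - u)) = (\<Sum>(u,v)\<in>D. v - u)"
      using D by (intro sum.cong) auto
    then show "(\<Sum>(u,v)\<in>D. norm (v - u)) < \<epsilon>" using D by simp
  qed
qed

lemma ac_const: "absolutely_continuous_on S (\<lambda>t. c)"
  by (rule ac_bound[OF ac_id ac_id, where B=0]) simp

lemma ac_add:
  fixes h1 h2 :: "real \<Rightarrow> 'a::real_normed_vector"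
  assumes "absolutely_continuous_on S h1" "absolutely_continuous_on S h2"
  shows "absolutely_continuous_on S (\<lambda>t. h1 t + h2 t)"
proof (rule ac_bound[OF assms, of _ 1])
  fix u v
  have "norm (h1 v + h2 v - (h1 u + h2 u)) = norm ((h1 v - h1 u) + (h2 v - h2 u))" by (simp add: algebra_simps)
  then show "norm (h1 v + h2 v - (h1 u + h2 u)) \<le> 1 * (norm (h1 v - h1 u) + norm (h2 v - h2 u))"
    using norm_triangle_ineq[of "h1 v - h1 u" "h2 v - h2 u"] by simp
qed

lemma ac_sum:
  fixes h :: "'i \<Rightarrow> real \<Rightarrow> 'a::real_normed_vector"
  shows "finite I \<Longrightarrow> (\<And>i. i \<in> I \<Longrightarrow> absolutely_continuous_on S (h i)) \<Longrightarrow> absolutely_continuous_on S (\<lambda>t. \<Sum>i\<in>I. h i t)"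
proof (induction I rule: finite_induct)
  case empty then show ?case using ac_const[of S 0] by simp
next
  case (insert i I)
  have "absolutely_continuous_on S (\<lambda>t. h i t + (\<Sum>i\<in>I. h i t))"
    using insert by (intro ac_add) auto
  then show ?case using insert by simp
qed

lemma ac_subset: "absolutely_continuous_on S h \<Longrightarrow> T \<subseteq> S \<Longrightarrow> absolutely_continuous_on T h"
  unfolding absolutely_continuous_on_def
proof (intro allI impI)
  fix \<epsilon> :: real
  assume a: "\<forall>\<epsilon>>0. \<exists>\<delta>>0. \<forall>D. finite D \<and> (\<forall>(u,v)\<in>D. u \<le> v \<and> {u..v} \<subseteq> S)
        \<and> disjoint_family_on (\<lambda>(u,v). {u<..<v}) D \<and> (\<Sum>(u,v)\<in>D. v - u) < \<delta>
        \<longrightarrow> (\<Sum>(u,v)\<in>D. norm (h v - h u)) < \<epsilon>" and T: "T \<subseteq> S" and e: "\<epsilon> > 0"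
  then obtain \<delta> where d: "\<delta> > 0" "\<forall>D. finite D \<and> (\<forall>(u,v)\<in>D. u \<le> v \<and> {u..v} \<subseteq> S)
        \<and> disjoint_family_on (\<lambda>(u,v). {u<..<v}) D \<and> (\<Sum>(u,v)\<in>D. v - u) < \<delta>
        \<longrightarrow> (\<Sum>(u,v)\<in>D. norm (h v - h u)) < \<epsilon>" by blast
  show "\<exists>\<delta>>0. \<forall>D. finite D \<and> (\<forall>(u,v)\<in>D. u \<le> v \<and> {u..v} \<subseteq> T)
        \<and> disjoint_family_on (\<lambda>(u,v). {u<..<v}) D \<and> (\<Sum>(u,v)\<in>D. v - u) < \<delta>
        \<longrightarrow> (\<Sum>(u,v)\<in>D. norm (h v - h u)) < \<epsilon>"
  proof (intro exI[of _ \<delta>] conjI allI impI)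
    fix D :: "(real \<times> real) set"
    assume D: "finite D \<and> (\<forall>(u,v)\<in>D. u \<le> v \<and> {u..v} \<subseteq> T)
        \<and> disjoint_family_on (\<lambda>(u,v). {u<..<v}) D \<and> (\<Sum>(u,v)\<in>D. v - u) < \<delta>"
    have "\<forall>(u,v)\<in>D. u \<le> v \<and> {u..v} \<subseteq> S" using D T by fast
    then show "(\<Sum>(u,v)\<in>D. norm (h v - h u)) < \<epsilon>" using d(2) D by blast
  qed (fact d(1))
qed

lemma ac_continuous:
  fixes h :: "real \<Rightarrow> 'a::real_normed_vector"
  assumes "absolutely_continuous_on {a..b} h"
  shows "continuous_on {a..b} h"
  unfolding continuous_on_iff
proof (intro ballI allI impI)
  fix t \<epsilon> :: real assume t: "t \<in> {a..b}" and e: "\<epsilon> > 0"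
  obtain \<delta> where d: "\<delta> > 0" "\<forall>D. finite D \<and> (\<forall>(u,v)\<in>D. u \<le> v \<and> {u..v} \<subseteq> {a..b})
        \<and> disjoint_family_on (\<lambda>(u,v). {u<..<v}) D \<and> (\<Sum>(u,v)\<in>D. v - u) < \<delta>
        \<longrightarrow> (\<Sum>(u,v)\<in>D. norm (h v - h u)) < \<epsilon>"
    using acD2[OF assms e] by blast
  show "\<exists>\<delta>>0. \<forall>x'\<in>{a..b}. dist x' t < \<delta> \<longrightarrow> dist (h x') (h t) < \<epsilon>"
  proof (intro exI[of _ \<delta>] conjI ballI impI)
    show "\<delta> > 0" by fact
    fix s assume s: "s \<in> {a..b}" "dist s t < \<delta>"
    define D where "D = {(min s t, max s t)}"
    have "max s t - min s t < \<delta>" using s by (auto simp: dist_real_def)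
    moreover have "{min s t..max s t} \<subseteq> {a..b}" using s t by auto
    ultimately have "(\<Sum>(u,v)\<in>D. norm (h v - h u)) < \<epsilon>"
      using d(2)[rule_format, of D] unfolding D_def
      by (auto simp: disjoint_family_on_def)
    then have "norm (h (max s t) - h (min s t)) < \<epsilon>" unfolding D_def by simp
    then show "dist (h s) (h t) < \<epsilon>"
      by (cases "s \<le> t") (auto simp: dist_norm norm_minus_commute max_def min_def)
  qed
qed

lemma ac_mult:
  fixes h1 h2 :: "real \<Rightarrow> real"
  assumes a1: "absolutely_continuous_on {a..b} h1" and a2: "absolutely_continuous_on {a..b} h2"
  shows "absolutely_continuous_on {a..b} (\<lambda>t. h1 t * h2 t)"
proof -
  have "bounded (h1 ` {a..b})" "bounded (h2 ` {a..b})"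
    using ac_continuous[OF a1] ac_continuous[OF a2]
    by (meson compact_Icc compact_continuous_image compact_imp_bounded)+
  then obtain M1 M2 where M1: "\<forall>t\<in>{a..b}. \<bar>h1 t\<bar> \<le> M1" and M2: "\<forall>t\<in>{a..b}. \<bar>h2 t\<bar> \<le> M2"
    unfolding bounded_iff by auto
  show ?thesis
  proof (rule ac_bound[OF a2 a1, of _ "\<bar>M1\<bar> + \<bar>M2\<bar>"])
    fix u v assume uv: "u \<in> {a..b}" "v \<in> {a..b}"
    have "h1 v * h2 v - h1 u * h2 u = h1 v * (h2 v - h2 u) + h2 u * (h1 v - h1 u)" by (simp add: algebra_simps)
    moreover have "\<bar>h1 v * (h2 v - h2 u) + h2 u * (h1 v - h1 u)\<bar> \<le> \<bar>h1 v * (h2 v - h2 u)\<bar> + \<bar>h2 u * (h1 v - h1 u)\<bar>"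
      by (rule abs_triangle_ineq)
    ultimately have "\<bar>h1 v * h2 v - h1 u * h2 u\<bar> \<le> \<bar>h1 v\<bar> * \<bar>h2 v - h2 u\<bar> + \<bar>h2 u\<bar> * \<bar>h1 v - h1 u\<bar>"
      by (simp add: abs_mult)
    also have "\<dots> \<le> (\<bar>M1\<bar> + \<bar>M2\<bar>) * \<bar>h2 v - h2 u\<bar> + (\<bar>M1\<bar> + \<bar>M2\<bar>) * \<bar>h1 v - h1 u\<bar>"
    proof -
      have b1: "\<bar>h1 v\<bar> \<le> \<bar>M1\<bar> + \<bar>M2\<bar>" using M1 uv(2) by fastforce
      have b2: "\<bar>h2 u\<bar> \<le> \<bar>M1\<bar> + \<bar>M2\<bar>" using M2 uv(1) by fastforce
      show ?thesis using mult_right_mono[OF b1 abs_ge_zero[of "h2 v - h2 u"]] mult_right_mono[OF b2 abs_ge_zero[of "h1 v - h1 u"]]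
        by linarith
    qed
    finally show "norm (h1 v * h2 v - h1 u * h2 u) \<le> (\<bar>M1\<bar> + \<bar>M2\<bar>) * (norm (h2 v - h2 u) + norm (h1 v - h1 u))"
      unfolding real_norm_def by (simp only: distrib_left)
  qed
qed



lemma smooth_comp_ac:
  fixes H :: "real \<times> (real^'n) \<Rightarrow> real" and x :: "real \<Rightarrow> real^'n"
  assumes Hs: "smooth_on (dom t0) H" and xac: "absolutely_continuous_on {a..b} x" and a: "t0 \<le> a"
  shows "absolutely_continuous_on {a..b} (\<lambda>t. H (t, x t))"
proof -
  have "bounded (x ` {a..b})"
    using ac_continuous[OF xac] by (meson compact_Icc compact_continuous_image compact_imp_bounded)
  then obtain R where R: "\<forall>t\<in>{a..b}. norm (x t) \<le> R" unfolding bounded_iff by auto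
  define K where "K = {a..b} \<times> cball (0::real^'n) R"
  have Kc: "convex K" unfolding K_def by (simp add: convex_Times)
  have Kk: "compact K" unfolding K_def by (simp add: compact_Times)
  have Kd: "K \<subseteq> dom t0" unfolding K_def dom_def using a by auto
  define D where "D p = frechet_derivative H (at p within dom t0)" for p
  have der: "\<And>p. p \<in> dom t0 \<Longrightarrow> (H has_derivative D p) (at p within dom t0)"
    using smooth_deriv(1)[OF Hs] unfolding D_def by blast
  have cont: "\<And>v. continuous_on (dom t0) (\<lambda>p. D p v)"
    using smooth_deriv(2)[OF Hs] unfolding D_def smooth_on_def by (metis Ck_on.simps(1))
  have "\<forall>e\<in>(Basis :: (real \<times> (real^'n)) set). \<exists>M. \<forall>p\<in>K. \<bar>D p e\<bar> \<le> M"
  proof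
    fix e :: "real \<times> (real^'n)"
    have "continuous_on K (\<lambda>p. D p e)" using continuous_on_subset[OF cont Kd] .
    then have "bounded ((\<lambda>p. D p e) ` K)" using Kk by (meson compact_continuous_image compact_imp_bounded)
    then show "\<exists>M. \<forall>p\<in>K. \<bar>D p e\<bar> \<le> M" unfolding bounded_iff by auto
  qed
  then obtain M where M: "\<And>e p. e \<in> Basis \<Longrightarrow> p \<in> K \<Longrightarrow> \<bar>D p e\<bar> \<le> M e" by metis
  define B where "B = (\<Sum>e\<in>(Basis :: (real \<times> (real^'n)) set). max (M e) 0)"
  have B0: "B \<ge> 0" unfolding B_def by (intro sum_nonneg) auto
  have on: "onorm (D p) \<le> B" if p: "p \<in> K" for p
  proof (rule onorm_le)
    fix w :: "real \<times> (real^'n)"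
    have lin: "linear (D p)" using der Kd p has_derivative_linear by blast
    have "D p w = D p (\<Sum>e\<in>Basis. (w \<bullet> e) *\<^sub>R e)" by (simp add: euclidean_representation)
    also have "\<dots> = (\<Sum>e\<in>Basis. (w \<bullet> e) * D p e)"
      by (simp only: linear_sum[OF lin] o_def linear_scale[OF lin] real_scaleR_def)
    finally have "\<bar>D p w\<bar> \<le> (\<Sum>e\<in>Basis. \<bar>w \<bullet> e\<bar> * \<bar>D p e\<bar>)"
      by (metis (no_types, lifting) abs_mult sum.cong sum_abs)
    also have "\<dots> \<le> (\<Sum>e\<in>Basis. norm w * max (M e) 0)"
    proof (rule sum_mono)
      fix e :: "real \<times> (real^'n)" assume e: "e \<in> Basis"
      have "\<bar>D p e\<bar> \<le> max (M e) 0" using M[OF e p] by linarith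
      moreover have "\<bar>w \<bullet> e\<bar> \<le> norm w" using Basis_le_norm[OF e] .
      ultimately show "\<bar>w \<bullet> e\<bar> * \<bar>D p e\<bar> \<le> norm w * max (M e) 0"
        by (intro mult_mono) auto
    qed
    also have "\<dots> = B * norm w" unfolding B_def by (simp add: sum_distrib_left mult.commute)
    finally show "norm (D p w) \<le> B * norm w" by simp
  qed
  have lip: "\<bar>H p - H q\<bar> \<le> B * norm (p - q)" if "p \<in> K" "q \<in> K" for p q
  proof -
    have "norm (H p - H q) \<le> B * norm (p - q)"
    proof (rule differentiable_bound[OF Kc _ on that])
      fix y assume "y \<in> K"
      then show "(H has_derivative D y) (at y within K)"
        using der Kd has_derivative_subset by blast
    qed
    then show ?thesis by simp
  qed
  show ?thesis
  proof (rule ac_bound[OF ac_id xac, where B=B])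
    fix u v assume uv: "u \<in> {a..b}" "v \<in> {a..b}"
    have inK: "(u, x u) \<in> K" "(v, x v) \<in> K" using uv R unfolding K_def by auto
    have "norm (H (v, x v) - H (u, x u)) \<le> B * norm ((v, x v) - (u, x u))"
      using lip[OF inK(2) inK(1)] by simp
    also have "\<dots> \<le> B * (norm (v - u) + norm (x v - x u))"
      using norm_Pair_le[of "v - u" "x v - x u"] B0 by (intro mult_left_mono) auto
    finally show "norm (H (v, x v) - H (u, x u)) \<le> B * (norm (v - u) + norm (x v - x u))" .
  qed
qed



lemma minv_right:
  fixes A :: "real^'n^'m"
  shows "invertible A \<Longrightarrow> A ** matrix_inv A = mat 1"
  unfolding invertible_def matrix_inv_def
  using someI_ex[of "\<lambda>A'. A ** A' = mat 1 \<and> A' ** A = mat 1"] by blast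

lemma chain_lemma:
  fixes \<Psi> :: "real \<Rightarrow> real^'n \<Rightarrow> real" and f :: "real \<Rightarrow> real^'n \<Rightarrow> real^'n"
    and g :: "real \<Rightarrow> real^'n \<Rightarrow> real^'m^'n" and x :: "real \<Rightarrow> real^'n" and U :: "real^'m"
  assumes Ps: "smooth_on (dom t0) (\<lambda>(t,y). \<Psi> t y)" and S: "S \<subseteq> {t0..}" and t: "t \<in> S"
   and xd: "(x has_vector_derivative (f t (x t) + g t (x t) *v U)) (at t within S)"
  shows "((\<lambda>s. \<Psi> s (x s)) has_real_derivative
      (Lf t0 f \<Psi> t (x t) + (\<Sum>i\<in>UNIV. U$i * Dpsi t0 \<Psi> t (x t) (0, column i (g t (x t)))))) (at t within S)"
proof -
  define H where "H = (\<lambda>(t,y). \<Psi> t y)"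
  define D where "D = Dpsi t0 \<Psi> t (x t)"
  define F where "F = f t (x t)"
  define G where "G = g t (x t)"
  have gd: "((\<lambda>s. (s, x s)) has_vector_derivative (1, F + G *v U)) (at t within S)"
    using has_vector_derivative_Pair[OF has_vector_derivative_id xd] unfolding F_def G_def .
  have inD: "(t, x t) \<in> dom t0" using S t by (auto simp: dom_def)
  have Hd: "(H has_derivative D) (at (t, x t) within dom t0)"
    using smooth_deriv(1)[OF Ps inD] unfolding D_def Dpsi_def H_def by simp
  have img: "(\<lambda>s. (s, x s)) ` S \<subseteq> dom t0" using S by (auto simp: dom_def)
  have "(H has_derivative D) (at ((\<lambda>s. (s, x s)) t) within (\<lambda>s. (s, x s)) ` S)"
    using has_derivative_subset[OF Hd img] by simp
  from vector_derivative_diff_chain_within[OF gd this]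
  have d1: "((\<lambda>s. \<Psi> s (x s)) has_vector_derivative D (1, F + G *v U)) (at t within S)"
    by (simp add: o_def H_def)
  have lin: "linear D" using Hd has_derivative_linear by blast
  have "D (1, F + G *v U) = D (1, F) + D (0, G *v U)"
    using linear_add[OF lin, of "(1, F)" "(0, G *v U)"] by simp
  also have "(0::real, G *v U) = (\<Sum>i\<in>UNIV. U$i *\<^sub>R ((0::real), column i G))"
    by (simp add: prod_eq_iff fst_sum snd_sum matrix_mult_sum scalar_mult_eq_scaleR)
  also have "D (\<Sum>i\<in>UNIV. U$i *\<^sub>R ((0::real), column i G)) = (\<Sum>i\<in>UNIV. U$i * D (0, column i G))"
    by (simp only: linear_sum[OF lin] o_def linear_scale[OF lin] real_scaleR_def)
  also have "D (1, F) = Lf t0 f \<Psi> t (x t)" unfolding D_def F_def Lf_def by simp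
  finally have "D (1, F + G *v U) = Lf t0 f \<Psi> t (x t) + (\<Sum>i\<in>UNIV. U$i * Dpsi t0 \<Psi> t (x t) (0, column i (g t (x t))))"
    unfolding D_def G_def .
  then show ?thesis using d1 by (simp add: has_real_derivative_iff_has_vector_derivative)
qed

lemma sum_identity:
  fixes a :: "nat \<Rightarrow> real"
  shows "(\<Sum>i=0..j. real (j choose i) * (a (Suc (j - i)) * a i + a (j - i) * a (Suc i)))
       = (\<Sum>i=0..Suc j. real (Suc j choose i) * a (Suc j - i) * a i)"
proof -
  define S1 where "S1 = (\<Sum>i=0..j. real (j choose i) * a (Suc (j - i)) * a i)"
  define S2 where "S2 = (\<Sum>i=0..j. real (j choose Suc i) * a (j - i) * a (Suc i))"
  define S3 where "S3 = (\<Sum>i=0..j. real (j choose i) * a (j - i) * a (Suc i))"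
  have L: "(\<Sum>i=0..j. real (j choose i) * (a (Suc (j - i)) * a i + a (j - i) * a (Suc i))) = S1 + S3"
    unfolding S1_def S3_def by (simp add: sum.distrib distrib_left mult.assoc)
  have "(\<Sum>i=0..Suc j. real (j choose i) * a (Suc j - i) * a i) = a (Suc j) * a 0 + S2"
    unfolding S2_def by (subst sum.atLeast0_atMost_Suc_shift) (simp add: o_def)
  moreover have "(\<Sum>i=0..Suc j. real (j choose i) * a (Suc j - i) * a i) = S1"
    unfolding S1_def by (subst sum.atLeast0_atMost_Suc) (auto intro!: sum.cong simp: Suc_diff_le)
  ultimately have S1: "S1 = a (Suc j) * a 0 + S2" by simp
  have "(\<Sum>i=0..Suc j. real (Suc j choose i) * a (Suc j - i) * a i)
      = a (Suc j) * a 0 + (\<Sum>i=0..j. real (Suc j choose Suc i) * a (j - i) * a (Suc i))"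
    by (subst sum.atLeast0_atMost_Suc_shift) (simp add: o_def)
  also have "(\<Sum>i=0..j. real (Suc j choose Suc i) * a (j - i) * a (Suc i)) = S3 + S2"
    unfolding S2_def S3_def by (simp add: sum.distrib distrib_right)
  finally show ?thesis using L S1 by simp
qed

lemma P_deriv:
  fixes A :: "nat \<Rightarrow> real \<Rightarrow> real"
  assumes d: "\<And>i. i \<le> j \<Longrightarrow> (A i has_real_derivative A (Suc i) t) (at t within S)"
  shows "((\<lambda>s. (1/2) * (\<Sum>i=0..j. real (j choose i) * A (j - i) s * A i s)) has_real_derivative
          (1/2) * (\<Sum>i=0..Suc j. real (Suc j choose i) * A (Suc j - i) t * A i t)) (at t within S)"
proof -
  have "((\<lambda>s. (1/2) * (\<Sum>i=0..j. real (j choose i) * A (j - i) s * A i s)) has_real_derivative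
          (1/2) * (\<Sum>i=0..j. real (j choose i) * (A (Suc (j - i)) t * A i t + A (j - i) t * A (Suc i) t))) (at t within S)"
  proof (intro DERIV_cmult DERIV_sum)
    fix i assume i: "i \<in> {0..j}"
    have d1: "(A (j - i) has_real_derivative A (Suc (j - i)) t) (at t within S)" using d by simp
    have d2: "(A i has_real_derivative A (Suc i) t) (at t within S)" using d i by simp
    have "((\<lambda>s. A (j - i) s * A i s) has_real_derivative
        (A (j - i) t * A (Suc i) t + A (Suc (j - i)) t * A i t)) (at t within S)"
      using DERIV_mult'[OF d1 d2] .
    then have "((\<lambda>s. real (j choose i) * (A (j - i) s * A i s)) has_real_derivative
        real (j choose i) * (A (Suc (j - i)) t * A i t + A (j - i) t * A (Suc i) t)) (at t within S)"
      by (intro DERIV_cmult) (simp add: add.commute)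
    then show "((\<lambda>s. real (j choose i) * A (j - i) s * A i s) has_real_derivative
        real (j choose i) * (A (Suc (j - i)) t * A i t + A (j - i) t * A (Suc i) t)) (at t within S)"
      by (simp add: mult.assoc)
  qed
  then show ?thesis using sum_identity[of j "\<lambda>i. A i t"] by simp
qed

lemma P_split:
  fixes a :: "nat \<Rightarrow> real"
  assumes "r \<ge> 1"
  shows "(1/2) * (\<Sum>i=0..r. real (r choose i) * a (r - i) * a i) = a r * a 0 + Ssum a r"
proof -
  obtain m where r: "r = Suc m" using assms by (cases r) auto
  have "(\<Sum>i=0..Suc m. real (Suc m choose i) * a (Suc m - i) * a i)
      = (\<Sum>i=0..m. real (Suc m choose i) * a (Suc m - i) * a i) + a 0 * a (Suc m)"
    by (subst sum.atLeast0_atMost_Suc) simp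
  also have "(\<Sum>i=0..m. real (Suc m choose i) * a (Suc m - i) * a i)
      = a (Suc m) * a 0 + (\<Sum>i=Suc 0..m. real (Suc m choose i) * a (Suc m - i) * a i)"
    by (subst sum.atLeast_Suc_atMost) auto
  finally show ?thesis unfolding r Ssum_def by (simp add: algebra_simps)
qed

lemma Ssum_cong: "(\<And>i. 1 \<le> i \<Longrightarrow> i < r \<Longrightarrow> a i = b i) \<Longrightarrow> Ssum a r = Ssum b r"
  unfolding Ssum_def by (intro arg_cong[where f="\<lambda>x. 1/2 * x"] sum.cong) auto

lemma zero_on_interval:
  fixes e :: "real \<Rightarrow> real"
  assumes ac: "absolutely_continuous_on {a..b} e" and N: "negligible N"
   and der: "\<And>t. t \<in> {a..b} - N \<Longrightarrow> (e has_real_derivative 0) (at t within {a..b})"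
   and t: "t \<in> {a..b}"
  shows "e t = e a"
proof (rule ac_zero_deriv_const[where N=N and e=e and a=a and b=t])
  show "a \<le> t" using t by simp
  show "absolutely_continuous_on {a..t} e" using ac_subset[OF ac] t by auto
  show "negligible N" by fact
  fix s assume s: "s \<in> {a..t} - N"
  then have "s \<in> {a..b} - N" using t by auto
  from DERIV_subset[OF der[OF this]] show "(e has_real_derivative 0) (at s within {a..t})" using t by auto
qed



lemma mat_vec_uminus: "(A::real^'n^'m) *v (- v) = - (A *v v)"
  by (simp add: matrix_vector_mult_def vec_eq_iff sum_negf)

theorem theorem1:
  fixes f :: "real \<Rightarrow> real^'n \<Rightarrow> real^'n"
    and g :: "real \<Rightarrow> real^'n \<Rightarrow> real^'m^'n"
    and \<phi> :: "real \<Rightarrow> real^'n \<Rightarrow> real^'m"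
    and \<rho> :: "'m \<Rightarrow> nat"
    and t0 T :: real
    and x0 :: "real^'n"
    and w :: "real \<Rightarrow> real^'m"
    and x :: "real \<Rightarrow> real^'n"
    and z :: "real \<Rightarrow> 'm \<Rightarrow> nat \<Rightarrow> real"
  assumes f_smooth: "smooth_on (dom t0) (\<lambda>(t,y). f t y)"
    and g_smooth: "smooth_on (dom t0) (\<lambda>(t,y). g t y)"
    and \<phi>_smooth: "smooth_on (dom t0) (\<lambda>(t,y). \<phi> t y)"
    and reldeg: "has_relative_degree t0 f g \<phi> \<rho>"
    and Omega_inv: "\<forall>(t,y)\<in>dom t0. invertible (Omega_g t0 f g \<phi> \<rho> t y)"
    and x0_safe: "\<forall>k. \<phi> t0 x0 $ k < 0"
    and T_gt: "T > t0"
    and w_L1: "w absolutely_integrable_on {t0..T}"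
    and x_ac: "absolutely_continuous_on {t0..T} x"
    and z_ac: "\<forall>k j. j < \<rho> k \<longrightarrow> absolutely_continuous_on {t0..T} (\<lambda>t. z t k j)"
    and x_init: "x t0 = x0"
    and z_init0: "\<forall>k. z t0 k 0 = sqrt (- 2 * \<phi> t0 x0 $ k)"
    and z_init: "\<forall>k i. 1 \<le> i \<and> i \<le> \<rho> k - 1 \<longrightarrow>
        z t0 k i = - (Lf_pow t0 f i (comp \<phi> k) t0 x0 + Ssum (z t0 k) i) / z t0 k 0"
    and x_ode: "AE t in lebesgue. t \<in> {t0..T} \<longrightarrow>
        (x has_vector_derivative
           (f t (x t) + g t (x t) *v feedback t0 f g \<phi> \<rho> t (x t) (z t) (w t))) (at t within {t0..T})"
    and z_ode: "AE t in lebesgue. t \<in> {t0..T} \<longrightarrow>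
        (\<forall>k j. j + 2 \<le> \<rho> k \<longrightarrow>
           ((\<lambda>s. z s k j) has_vector_derivative z t k (j + 1)) (at t within {t0..T}))"
    and z_last_ode: "AE t in lebesgue. t \<in> {t0..T} \<longrightarrow>
        (\<forall>k. ((\<lambda>s. z s k (\<rho> k - 1)) has_vector_derivative w t $ k) (at t within {t0..T}))"
  shows "\<forall>t\<in>{t0..T}. \<forall>k. \<phi> t (x t) $ k \<le> 0"
proof (intro ballI allI)
  fix t k assume t: "t \<in> {t0..T}"
  define r where "r = \<rho> k"
  have r1: "1 \<le> r" using reldeg unfolding has_relative_degree_def r_def by blast
  define \<psi> where "\<psi> j = Lf_pow t0 f j (comp \<phi> k)" for j
  have cs0: "smooth_on (dom t0) (\<lambda>p. (case p of (t,y) \<Rightarrow> \<phi> t y) $ k)"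
    using smooth_linear[OF bounded_linear_vec_nth \<phi>_smooth] .
  have cs: "smooth_on (dom t0) (\<lambda>(t,y). comp \<phi> k t y)"
    by (rule smooth_cong[OF cs0]) (auto simp: comp_def split: prod.splits)
  have \<psi>s: "smooth_on (dom t0) (\<lambda>(t,y). \<psi> j t y)" for j
    unfolding \<psi>_def using Lf_pow_smooth[OF f_smooth cs] .
  define Z where "Z s i = (if i < r then z s k i else w s $ k)" for s i
  define P where "P j s = (1/2) * (\<Sum>i=0..j. real (j choose i) * Z s (j - i) * Z s i)" for j s
  define e where "e j s = \<psi> j s (x s) + P j s" for j s
  define U where "U s = feedback t0 f g \<phi> \<rho> s (x s) (z s) (w s)" for s
  define Q where "Q s \<longleftrightarrow> (x has_vector_derivative (f s (x s) + g s (x s) *v U s)) (at s within {t0..T})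
      \<and> (\<forall>k j. j + 2 \<le> \<rho> k \<longrightarrow> ((\<lambda>s. z s k j) has_vector_derivative z s k (j + 1)) (at s within {t0..T}))
      \<and> (\<forall>k. ((\<lambda>s. z s k (\<rho> k - 1)) has_vector_derivative w s $ k) (at s within {t0..T}))" for s
  have "AE s in lebesgue. s \<in> {t0..T} \<longrightarrow> Q s"
    using x_ode z_ode z_last_ode unfolding Q_def U_def by eventually_elim blast
  then obtain N0 where N0: "{s \<in> space lebesgue. \<not> (s \<in> {t0..T} \<longrightarrow> Q s)} \<subseteq> N0" "N0 \<in> null_sets lebesgue"
    by (elim AE_E) (metis null_setsI)
  have N: "negligible N0" using N0(2) negligible_iff_null_sets by blast
  have good: "Q s" if "s \<in> {t0..T} - N0" for s using N0(1) that by auto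
  have inD: "(s, x s) \<in> dom t0" if "s \<in> {t0..T}" for s using that by (simp add: dom_def)

  have Zd: "((\<lambda>s. Z s i) has_real_derivative Z s (Suc i)) (at s within {t0..T})"
    if s: "s \<in> {t0..T} - N0" and i: "i < r" for s i
  proof -
    have Qs: "Q s" using good[OF s] .
    have eqf: "(\<lambda>s. Z s i) = (\<lambda>s. z s k i)" using i by (simp add: Z_def)
    show ?thesis
    proof (cases "Suc i < r")
      case True
      then have "((\<lambda>s. z s k i) has_vector_derivative z s k (i + 1)) (at s within {t0..T})"
        using Qs unfolding Q_def r_def by auto
      then show ?thesis using True eqf by (simp add: Z_def has_real_derivative_iff_has_vector_derivative)
    next
      case False
      then have ir: "i = \<rho> k - 1" "\<not> Suc i < r" using i unfolding r_def by auto
      have "((\<lambda>s. z s k (\<rho> k - 1)) has_vector_derivative w s $ k) (at s within {t0..T})"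
        using Qs unfolding Q_def by auto
      then show ?thesis using ir eqf by (simp add: Z_def has_real_derivative_iff_has_vector_derivative)
    qed
  qed

  have Pd: "(P j has_real_derivative (1/2) * (\<Sum>i=0..Suc j. real (Suc j choose i) * Z s (Suc j - i) * Z s i))
      (at s within {t0..T})" if s: "s \<in> {t0..T} - N0" and j: "j < r" for s j
  proof -
    have "((\<lambda>s. (1/2) * (\<Sum>i=0..j. real (j choose i) * (\<lambda>i s. Z s i) (j - i) s * (\<lambda>i s. Z s i) i s)) has_real_derivative
          (1/2) * (\<Sum>i=0..Suc j. real (Suc j choose i) * (\<lambda>i s. Z s i) (Suc j - i) s * (\<lambda>i s. Z s i) i s)) (at s within {t0..T})"
      by (rule P_deriv) (use Zd[OF s] j in auto)
    then show ?thesis unfolding P_def by simp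
  qed

  have \<psi>d: "((\<lambda>s. \<psi> j s (x s)) has_real_derivative
      (\<psi> (Suc j) s (x s) + (\<Sum>i\<in>UNIV. U s $ i * LgLf t0 f g j (comp \<phi> k) s (x s) $ i))) (at s within {t0..T})"
    if s: "s \<in> {t0..T} - N0" for s j
  proof -
    have xd: "(x has_vector_derivative (f s (x s) + g s (x s) *v U s)) (at s within {t0..T})"
      using good[OF s] unfolding Q_def by blast
    have sub: "{t0..T} \<subseteq> {t0..}" by auto
    have sT: "s \<in> {t0..T}" using s by blast
    from chain_lemma[where \<Psi>="\<psi> j" and f=f and g=g and x=x and U="U s" and t=s and S="{t0..T}" and t0=t0, OF \<psi>s[of j] sub sT xd]
    show ?thesis by (simp add: \<psi>_def Lf_pow_Suc LgLf_def)
  qed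

  have ed: "(e j has_real_derivative (if Suc j < r then e (Suc j) s else 0)) (at s within {t0..T})"
    if s: "s \<in> {t0..T} - N0" and j: "j < r" for s j
  proof -
    have sD: "(s, x s) \<in> dom t0" using inD s by blast
    have d: "(e j has_real_derivative
        (\<psi> (Suc j) s (x s) + (\<Sum>i\<in>UNIV. U s $ i * LgLf t0 f g j (comp \<phi> k) s (x s) $ i))
        + (1/2) * (\<Sum>i=0..Suc j. real (Suc j choose i) * Z s (Suc j - i) * Z s i)) (at s within {t0..T})"
    proof -
      have "((\<lambda>s. \<psi> j s (x s) + P j s) has_real_derivative
        (\<psi> (Suc j) s (x s) + (\<Sum>i\<in>UNIV. U s $ i * LgLf t0 f g j (comp \<phi> k) s (x s) $ i))
        + (1/2) * (\<Sum>i=0..Suc j. real (Suc j choose i) * Z s (Suc j - i) * Z s i)) (at s within {t0..T})"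
        by (rule DERIV_add[OF \<psi>d[OF s] Pd[OF s j]])
      moreover have "(\<lambda>s. \<psi> j s (x s) + P j s) = e j" by (simp add: e_def fun_eq_iff)
      ultimately show ?thesis by simp
    qed
    show ?thesis
    proof (cases "Suc j < r")
      case True
      then have "j + 2 \<le> \<rho> k" unfolding r_def by simp
      then have "LgLf t0 f g j (comp \<phi> k) s (x s) = 0"
        using reldeg sD unfolding has_relative_degree_def by blast
      then have "\<psi> (Suc j) s (x s) + (\<Sum>i\<in>UNIV. U s $ i * LgLf t0 f g j (comp \<phi> k) s (x s) $ i)
        + (1/2) * (\<Sum>i=0..Suc j. real (Suc j choose i) * Z s (Suc j - i) * Z s i) = e (Suc j) s"
        by (simp add: e_def P_def)
      then show ?thesis using d True by simp
    next
      case False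
      then have jr: "Suc j = r" using j by simp
      have jr': "j = \<rho> k - 1" using jr unfolding r_def by simp
      define Om where "Om = Omega_g t0 f g \<phi> \<rho> s (x s)"
      define Y where "Y = Omega_f t0 f \<phi> \<rho> s (x s) (z s) + Dz (z s) (w s)"
      have inv: "invertible Om" using Omega_inv sD unfolding Om_def by blast
      have "Om *v U s = - Y"
      proof -
        have "Om *v U s = - (Om *v (matrix_inv Om *v Y))"
          unfolding U_def feedback_def Om_def Y_def by (simp add: mat_vec_uminus)
        also have "\<dots> = - Y" using minv_right[OF inv] by (simp add: matrix_vector_mul_assoc)
        finally show ?thesis .
      qed
      then have "(Om *v U s) $ k = - Y $ k" by simp
      moreover have "(Om *v U s) $ k = (\<Sum>i\<in>UNIV. U s $ i * LgLf t0 f g j (comp \<phi> k) s (x s) $ i)"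
        unfolding Om_def Omega_g_def matrix_vector_mult_def jr' by (simp add: mult.commute)
      moreover have "Y $ k = Ssum (z s k) r + \<psi> r s (x s) + z s k 0 * w s $ k"
        unfolding Y_def Omega_f_def Dz_def \<psi>_def r_def by simp
      ultimately have L: "(\<Sum>i\<in>UNIV. U s $ i * LgLf t0 f g j (comp \<phi> k) s (x s) $ i)
          = - (Ssum (z s k) r + \<psi> r s (x s) + z s k 0 * w s $ k)" by simp
      have "(1/2) * (\<Sum>i=0..r. real (r choose i) * Z s (r - i) * Z s i) = Z s r * Z s 0 + Ssum (Z s) r"
        using P_split[OF r1, of "Z s"] .
      moreover have "Ssum (Z s) r = Ssum (z s k) r" by (rule Ssum_cong) (simp add: Z_def)
      moreover have "Z s r = w s $ k" "Z s 0 = z s k 0" using r1 by (simp_all add: Z_def)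
      ultimately have R: "(1/2) * (\<Sum>i=0..r. real (r choose i) * Z s (r - i) * Z s i) = w s $ k * z s k 0 + Ssum (z s k) r"
        by simp
      have "\<psi> (Suc j) s (x s) + (\<Sum>i\<in>UNIV. U s $ i * LgLf t0 f g j (comp \<phi> k) s (x s) $ i)
        + (1/2) * (\<Sum>i=0..Suc j. real (Suc j choose i) * Z s (Suc j - i) * Z s i) = 0"
        unfolding jr L R by simp
      then show ?thesis using d False by simp
    qed
  qed

  have zac: "absolutely_continuous_on {t0..T} (\<lambda>s. z s k i)" if "i < r" for i
    using z_ac that unfolding r_def by blast
  have eac: "absolutely_continuous_on {t0..T} (e j)" if j: "j < r" for j
  proof -
    have a1: "absolutely_continuous_on {t0..T} (\<lambda>s. \<psi> j s (x s))"
      using smooth_comp_ac[OF \<psi>s x_ac order_refl] by simp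
    have "absolutely_continuous_on {t0..T} (\<lambda>s. (1/2) * (\<Sum>i=0..j. real (j choose i) * z s k (j - i) * z s k i))"
      using j by (intro ac_mult ac_const ac_sum zac) auto
    moreover have "(\<lambda>s. (1/2) * (\<Sum>i=0..j. real (j choose i) * z s k (j - i) * z s k i)) = P j"
      using j unfolding P_def Z_def by (intro ext arg_cong[where f="\<lambda>y. 1/2 * y"] sum.cong) auto
    ultimately have a2: "absolutely_continuous_on {t0..T} (P j)" by simp
    have "absolutely_continuous_on {t0..T} (\<lambda>s. \<psi> j s (x s) + P j s)" by (rule ac_add[OF a1 a2])
    moreover have "(\<lambda>s. \<psi> j s (x s) + P j s) = e j" by (simp add: e_def fun_eq_iff)
    ultimately show ?thesis by simp
  qed

  have z0pos: "z t0 k 0 > 0" using z_init0 x0_safe by simp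
  have e0: "e j t0 = 0" if j: "j < r" for j
  proof (cases "j = 0")
    case True
    have "P 0 t0 = (1/2) * (z t0 k 0 * z t0 k 0)" using r1 by (simp add: P_def Z_def)
    also have "z t0 k 0 * z t0 k 0 = - 2 * \<phi> t0 x0 $ k"
    proof -
      have "\<phi> t0 x0 $ k < 0" using x0_safe by blast
      then show ?thesis using z_init0 by (simp add: real_sqrt_mult_self)
    qed
    finally have "P 0 t0 = - \<phi> t0 x0 $ k" by simp
    moreover have "\<psi> 0 t0 (x t0) = \<phi> t0 x0 $ k" by (simp add: \<psi>_def Lf_pow_0 comp_def x_init)
    ultimately show ?thesis using True by (simp add: e_def)
  next
    case False
    then have j1: "1 \<le> j" by simp
    have "P j t0 = Z t0 j * Z t0 0 + Ssum (Z t0) j" unfolding P_def by (rule P_split[OF j1])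
    moreover have "Ssum (Z t0) j = Ssum (z t0 k) j" by (rule Ssum_cong) (use j in \<open>simp add: Z_def\<close>)
    moreover have "Z t0 j = z t0 k j" "Z t0 0 = z t0 k 0" using j by (simp_all add: Z_def)
    moreover have "z t0 k j = - (\<psi> j t0 x0 + Ssum (z t0 k) j) / z t0 k 0"
      using z_init j1 j unfolding \<psi>_def r_def by auto
    ultimately have "P j t0 = - (\<psi> j t0 x0 + Ssum (z t0 k) j) + Ssum (z t0 k) j"
      using z0pos by simp
    then show ?thesis by (simp add: e_def x_init)
  qed

  have down: "\<forall>s\<in>{t0..T}. e (r - 1 - n) s = 0" if "n < r" for n
    using that
  proof (induction n)
    case 0
    have "e (r - 1) s = e (r - 1) t0" if s: "s \<in> {t0..T}" for s
    proof (rule zero_on_interval[OF eac N _ s])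
      show "r - 1 < r" using r1 by simp
      fix s' assume s': "s' \<in> {t0..T} - N0"
      have "\<not> Suc (r - 1) < r" by simp
      then show "(e (r - 1) has_real_derivative 0) (at s' within {t0..T})"
        using ed[OF s', of "r - 1"] r1 by simp
    qed
    then show ?case using e0[of "r - 1"] r1 by simp
  next
    case (Suc n)
    have IH: "\<forall>s\<in>{t0..T}. e (r - 1 - n) s = 0" using Suc by simp
    define m where "m = r - 1 - Suc n"
    have mr: "m < r" "Suc m < r" "Suc m = r - 1 - n" using Suc.prems unfolding m_def by auto
    have "e m s = e m t0" if s: "s \<in> {t0..T}" for s
    proof (rule zero_on_interval[OF eac N _ s])
      show "m < r" by fact
      fix s' assume s': "s' \<in> {t0..T} - N0"
      have "e (Suc m) s' = 0" using IH s' mr(3) by auto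
      then show "(e m has_real_derivative 0) (at s' within {t0..T})"
        using ed[OF s' mr(1)] mr(2) by simp
    qed
    then show ?case using e0[OF mr(1)] unfolding m_def by simp
  qed
  have "e 0 t = 0" using down[of "r - 1"] r1 t by simp
  moreover have "P 0 t = (1/2) * (z t k 0 * z t k 0)" using r1 by (simp add: P_def Z_def)
  moreover have "\<psi> 0 t (x t) = \<phi> t (x t) $ k" by (simp add: \<psi>_def Lf_pow_0 comp_def)
  ultimately have "\<phi> t (x t) $ k = - (1/2) * (z t k 0 * z t k 0)" by (simp add: e_def)
  then show "\<phi> t (x t) $ k \<le> 0" by simp
qed

end
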